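(* Let $\eta$ be a (sufficiently regular, e.g. classical) solution of the uniformly compressing curve-shortening flow described below and let $M(t)=\frac12\int_0^1|\eta(t,s)|^2\,ds$ be its $L^2$-mass. Then $\partial_t M(t)=-1$.
   Context: $\mathbb S^1=\mathbb R/\mathbb Z$, $d\ge2$, $L(\eta)=\int_0^1|\partial_s\eta|\,ds$. The flow: $\eta:[0,t^\ast)\times\mathbb S^1\to\mathbb R^d$ with $\int_0^1\eta(t,s)\,ds=0$ and $|\partial_s\eta(t,s)|=L(t)>0$ for all $(t,s)$, satisfying $\partial_t\eta=L(t)^{-2}\partial_s(\tilde\sigma\partial_s\eta)$, where $\tilde\sigma$ satisfies $\partial_{ss}\tilde\sigma-L^{-2}\tilde\sigma|\partial_{ss}\eta|^2=-L^{-2}\int_0^1\tilde\sigma|\partial_{ss}\eta|^2\,ds$ and $\int_0^1\tilde\sigma(t,s)\,ds=1$ for all $t$. *)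

theory Defs
  imports "HOL-Analysis.Analysis"
begin

text \<open>Curves on S^1 = R/Z are represented as 1-periodic functions on the reals.\<close>

definition curve_length :: "(real \<Rightarrow> 'a::real_normed_vector) \<Rightarrow> real" where
  "curve_length g = integral {0..1} (\<lambda>s. norm (vector_derivative g (at s)))"

definition L2_mass :: "(real \<Rightarrow> 'a::real_normed_vector) \<Rightarrow> real" where
  "L2_mass g = (1/2) * integral {0..1} (\<lambda>s. (norm (g s))\<^sup>2)"

end

theory Submission
  imports Defs
begin

lemma vd_inner:
  fixes f g :: "real \<Rightarrow> 'a::real_inner"
  assumes "(f has_vector_derivative f') (at x within S)" "(g has_vector_derivative g') (at x within S)"
  shows "((\<lambda>x. f x \<bullet> g x) has_real_derivative (f x \<bullet> g' + f' \<bullet> g x)) (at x within S)"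
proof -
  have "((\<lambda>x. f x \<bullet> g x) has_derivative (\<lambda>h. f x \<bullet> (h *\<^sub>R g') + (h *\<^sub>R f') \<bullet> g x)) (at x within S)"
    using has_derivative_inner[OF assms[unfolded has_vector_derivative_def]] .
  moreover have "(\<lambda>h. f x \<bullet> (h *\<^sub>R g') + (h *\<^sub>R f') \<bullet> g x) = (*) (f x \<bullet> g' + f' \<bullet> g x)"
    by (auto simp: algebra_simps fun_eq_iff)
  ultimately show ?thesis by (simp add: has_field_derivative_def)
qed

theorem proposition2p6:
  fixes \<eta> \<eta>\<^sub>t \<eta>\<^sub>s \<eta>\<^sub>s\<^sub>s :: "real \<Rightarrow> real \<Rightarrow> real ^ 'd"
    and \<sigma> \<sigma>\<^sub>s \<sigma>\<^sub>s\<^sub>s :: "real \<Rightarrow> real \<Rightarrow> real"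
    and T :: real
  assumes dim: "CARD('d) \<ge> 2"
    and T_pos: "T > 0"
    \<comment> \<open>periodicity in s (curves on S^1 = R/Z)\<close>
    and per_eta: "\<And>t s. t \<in> {0..<T} \<Longrightarrow> \<eta> t (s + 1) = \<eta> t s"
    and per_sigma: "\<And>t s. t \<in> {0..<T} \<Longrightarrow> \<sigma> t (s + 1) = \<sigma> t s"
    \<comment> \<open>regularity: classical partial derivatives, jointly continuous\<close>
    and d_s: "\<And>t s. t \<in> {0..<T} \<Longrightarrow> ((\<lambda>s. \<eta> t s) has_vector_derivative \<eta>\<^sub>s t s) (at s)"
    and d_ss: "\<And>t s. t \<in> {0..<T} \<Longrightarrow> ((\<lambda>s. \<eta>\<^sub>s t s) has_vector_derivative \<eta>\<^sub>s\<^sub>s t s) (at s)"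
    and d_t: "\<And>t s. t \<in> {0..<T} \<Longrightarrow> ((\<lambda>t. \<eta> t s) has_vector_derivative \<eta>\<^sub>t t s) (at t within {0..<T})"
    and cont_eta: "continuous_on ({0..<T} \<times> UNIV) (\<lambda>(t, s). \<eta> t s)"
    and cont_eta_t: "continuous_on ({0..<T} \<times> UNIV) (\<lambda>(t, s). \<eta>\<^sub>t t s)"
    and cont_eta_s: "continuous_on ({0..<T} \<times> UNIV) (\<lambda>(t, s). \<eta>\<^sub>s t s)"
    and cont_eta_ss: "continuous_on ({0..<T} \<times> UNIV) (\<lambda>(t, s). \<eta>\<^sub>s\<^sub>s t s)"
    and sig_s: "\<And>t s. t \<in> {0..<T} \<Longrightarrow> ((\<lambda>s. \<sigma> t s) has_real_derivative \<sigma>\<^sub>s t s) (at s)"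
    and sig_ss: "\<And>t s. t \<in> {0..<T} \<Longrightarrow> ((\<lambda>s. \<sigma>\<^sub>s t s) has_real_derivative \<sigma>\<^sub>s\<^sub>s t s) (at s)"
    and cont_sig_ss: "\<And>t. t \<in> {0..<T} \<Longrightarrow> continuous_on UNIV (\<sigma>\<^sub>s\<^sub>s t)"
    \<comment> \<open>zero mean, constant speed equal to the length\<close>
    and mean0: "\<And>t. t \<in> {0..<T} \<Longrightarrow> integral {0..1} (\<lambda>s. \<eta> t s) = 0"
    and L_pos: "\<And>t. t \<in> {0..<T} \<Longrightarrow> curve_length (\<eta> t) > 0"
    and speed: "\<And>t s. t \<in> {0..<T} \<Longrightarrow> norm (\<eta>\<^sub>s t s) = curve_length (\<eta> t)"
    \<comment> \<open>the flow equation  \<partial>_t \<eta> = L^{-2} \<partial>_s (\<sigma> \<partial>_s \<eta>)\<close>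
    and flow: "\<And>t s. t \<in> {0..<T} \<Longrightarrow>
        \<eta>\<^sub>t t s = (1 / (curve_length (\<eta> t))\<^sup>2) *\<^sub>R
                   vector_derivative (\<lambda>r. \<sigma> t r *\<^sub>R \<eta>\<^sub>s t r) (at s)"
    \<comment> \<open>the equation for the tension \<sigma>\<close>
    and sigma_eq: "\<And>t s. t \<in> {0..<T} \<Longrightarrow>
        \<sigma>\<^sub>s\<^sub>s t s - (1 / (curve_length (\<eta> t))\<^sup>2) * \<sigma> t s * (norm (\<eta>\<^sub>s\<^sub>s t s))\<^sup>2
          = - (1 / (curve_length (\<eta> t))\<^sup>2) *
              integral {0..1} (\<lambda>r. \<sigma> t r * (norm (\<eta>\<^sub>s\<^sub>s t r))\<^sup>2)"
    and sigma_int: "\<And>t. t \<in> {0..<T} \<Longrightarrow> integral {0..1} (\<lambda>s. \<sigma> t s) = 1"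
  shows "\<forall>t \<in> {0..<T}.
           ((\<lambda>t. L2_mass (\<eta> t)) has_real_derivative (-1)) (at t within {0..<T})"
proof
  fix t assume t: "t \<in> {0..<T}"
  define L where "L = curve_length (\<eta> t)"
  have Lp: "L > 0" using L_pos[OF t] by (simp add: L_def)
  have per_s: "\<eta>\<^sub>s t (s + 1) = \<eta>\<^sub>s t s" for s
  proof -
    have sh: "((\<lambda>s. s + 1) has_vector_derivative 1) (at s)"
      by (auto intro!: derivative_eq_intros simp: has_real_derivative_iff_has_vector_derivative[symmetric])
    have "((\<eta> t \<circ> (\<lambda>s. s + 1)) has_vector_derivative (1 *\<^sub>R \<eta>\<^sub>s t (s + 1))) (at s)"
      by (rule vector_diff_chain_at[OF sh]) (use d_s[OF t, of "s+1"] in simp)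
    moreover have "\<eta> t \<circ> (\<lambda>s. s + 1) = \<eta> t" using per_eta[OF t] by (auto simp: fun_eq_iff)
    ultimately have "(\<eta> t has_vector_derivative \<eta>\<^sub>s t (s + 1)) (at s)" by simp
    from vector_derivative_unique_at[OF this] d_s[OF t, of s] show ?thesis by simp
  qed
  have nrm: "\<eta>\<^sub>s t s \<bullet> \<eta>\<^sub>s t s = L\<^sup>2" for s
    using speed[OF t, of s] by (simp add: L_def power2_norm_eq_inner[symmetric])
  have sig_cont: "continuous_on {0..1} (\<sigma> t)"
    by (rule continuous_at_imp_continuous_on)
       (use sig_s[OF t] DERIV_isCont in blast)
  have sig_int: "(\<sigma> t has_integral 1) {0..1}"
    using integrable_continuous_real[OF sig_cont] sigma_int[OF t]
    by (metis has_integral_integral)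
  define g where "g s = \<sigma> t s * (\<eta> t s \<bullet> \<eta>\<^sub>s t s)" for s
  define g' where "g' s = \<sigma>\<^sub>s t s * (\<eta> t s \<bullet> \<eta>\<^sub>s t s) + \<sigma> t s * (\<eta> t s \<bullet> \<eta>\<^sub>s\<^sub>s t s + \<eta>\<^sub>s t s \<bullet> \<eta>\<^sub>s t s)" for s
  have gd: "(g has_real_derivative g' s) (at s)" for s
  proof -
    have "((\<lambda>s. \<eta> t s \<bullet> \<eta>\<^sub>s t s) has_real_derivative (\<eta> t s \<bullet> \<eta>\<^sub>s\<^sub>s t s + \<eta>\<^sub>s t s \<bullet> \<eta>\<^sub>s t s)) (at s)"
      by (rule vd_inner[OF d_s[OF t] d_ss[OF t]])
    from DERIV_mult[OF sig_s[OF t] this] show ?thesis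
      unfolding g_def[abs_def] g'_def by (simp add: algebra_simps)
  qed
  have gint: "(g' has_integral (g 1 - g 0)) {0..1}"
    by (rule fundamental_theorem_of_calculus)
       (auto simp: has_real_derivative_iff_has_vector_derivative[symmetric] intro: has_field_derivative_at_within[OF gd])
  have g10: "g 1 = g 0"
    using per_eta[OF t, of 0] per_sigma[OF t, of 0] per_s[of 0] by (simp add: g_def)
  have i1: "((\<lambda>s. g' s - \<sigma> t s * L\<^sup>2) has_integral (0 - 1 * L\<^sup>2)) {0..1}"
    using has_integral_diff[OF gint has_integral_mult_left[OF sig_int, of "L\<^sup>2"]] g10 by simp
  have i2: "((\<lambda>s. (1 / L\<^sup>2) * (g' s - \<sigma> t s * L\<^sup>2)) has_integral (1 / L\<^sup>2) * (0 - 1 * L\<^sup>2)) {0..1}"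
    by (rule has_integral_mult_right[OF i1])
  have pt: "\<eta> t s \<bullet> \<eta>\<^sub>t t s = (1 / L\<^sup>2) * (g' s - \<sigma> t s * L\<^sup>2)" for s
  proof -
    have "((\<lambda>r. \<sigma> t r *\<^sub>R \<eta>\<^sub>s t r) has_vector_derivative (\<sigma> t s *\<^sub>R \<eta>\<^sub>s\<^sub>s t s + \<sigma>\<^sub>s t s *\<^sub>R \<eta>\<^sub>s t s)) (at s)"
      by (rule has_vector_derivative_scaleR[OF sig_s[OF t] d_ss[OF t]])
    note vd = this
    have "\<eta>\<^sub>t t s = (1 / L\<^sup>2) *\<^sub>R (\<sigma> t s *\<^sub>R \<eta>\<^sub>s\<^sub>s t s + \<sigma>\<^sub>s t s *\<^sub>R \<eta>\<^sub>s t s)"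
      using flow[OF t, of s] vector_derivative_at[OF vd] by (simp add: L_def)
    then show ?thesis unfolding g'_def nrm by (simp add: inner_add_right algebra_simps)
  qed
  have i3: "((\<lambda>s. 2 * (\<eta> t s \<bullet> \<eta>\<^sub>t t s)) has_integral -2) {0..1}"
  proof -
    have "((\<lambda>s. 2 * ((1 / L\<^sup>2) * (g' s - \<sigma> t s * L\<^sup>2))) has_integral 2 * ((1 / L\<^sup>2) * (0 - 1 * L\<^sup>2))) {0..1}"
      by (rule has_integral_mult_right[OF i2])
    moreover have "2 * ((1 / L\<^sup>2) * (0 - 1 * L\<^sup>2)) = (-2::real)" using Lp by simp
    ultimately show ?thesis by (simp add: pt)
  qed
  have contT: "continuous_on ({0..<T} \<times> cbox 0 1) (\<lambda>(t, s). 2 * (\<eta> t s \<bullet> \<eta>\<^sub>t t s))"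
  proof -
    have a: "continuous_on ({0..<T} \<times> cbox 0 1) (\<lambda>(t, s). \<eta> t s)"
      by (rule continuous_on_subset[OF cont_eta]) auto
    have b: "continuous_on ({0..<T} \<times> cbox 0 1) (\<lambda>(t, s). \<eta>\<^sub>t t s)"
      by (rule continuous_on_subset[OF cont_eta_t]) auto
    have "continuous_on ({0..<T} \<times> cbox 0 1) (\<lambda>p. 2 * ((\<lambda>(t, s). \<eta> t s) p \<bullet> (\<lambda>(t, s). \<eta>\<^sub>t t s) p))"
      by (intro continuous_intros a b)
    thus ?thesis by (simp add: split_beta)
  qed
  have lb: "((\<lambda>x. integral (cbox 0 1) (\<lambda>s. (norm (\<eta> x s))\<^sup>2)) has_field_derivative
      integral (cbox 0 1) (\<lambda>s. 2 * (\<eta> t s \<bullet> \<eta>\<^sub>t t s))) (at t within {0..<T})"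
  proof (rule leibniz_rule_field_derivative[OF _ _ contT t])
    fix x s assume x: "x \<in> {0..<T}" and "s \<in> cbox (0::real) 1"
    have "((\<lambda>x. \<eta> x s \<bullet> \<eta> x s) has_real_derivative (\<eta> x s \<bullet> \<eta>\<^sub>t x s + \<eta>\<^sub>t x s \<bullet> \<eta> x s)) (at x within {0..<T})"
      by (rule vd_inner[OF d_t[OF x] d_t[OF x]])
    thus "((\<lambda>x. (norm (\<eta> x s))\<^sup>2) has_real_derivative 2 * (\<eta> x s \<bullet> \<eta>\<^sub>t x s)) (at x within {0..<T})"
      by (simp add: power2_norm_eq_inner inner_commute)
  next
    fix x assume x: "x \<in> {0..<T}"
    have "continuous_on (cbox 0 1) (\<eta> x)"
      by (rule continuous_at_imp_continuous_on)
         (use d_s[OF x] has_vector_derivative_continuous in blast)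
    hence "continuous_on (cbox 0 1) (\<lambda>s. (norm (\<eta> x s))\<^sup>2)"
      by (intro continuous_intros) auto
    thus "(\<lambda>s. (norm (\<eta> x s))\<^sup>2) integrable_on cbox 0 1"
      by (rule integrable_continuous)
  qed (simp add: convex_real_interval)
  have "integral (cbox 0 1) (\<lambda>s. 2 * (\<eta> t s \<bullet> \<eta>\<^sub>t t s)) = -2"
    using integral_unique[OF i3] by (simp only: cbox_interval)
  with DERIV_cmult[OF lb, of "1/2"]
  show "((\<lambda>t. L2_mass (\<eta> t)) has_real_derivative (-1)) (at t within {0..<T})"
    unfolding L2_mass_def by simp
qed

end
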